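(* Let $X$ be a finite set, $0<p<1$, and let $\mathcal F\subseteq 2^X$ be a monotone increasing family. Then $$(1-p)\,I_p(\mathcal F)\;\ge\;(1-\mu_p(\mathcal F))\,\log_{1-p}\big(1-\mu_p(\mathcal F)\big),$$ with the convention $0\cdot\log_{1-p}0=0$.
   Context: For a finite set $X$ with $|X|=n$ and $p\in[0,1]$, $\mu_p$ is the product measure on $2^X$ given by $\mu_p(S)=p^{|S|}(1-p)^{n-|S|}$, and $\mu_p(\mathcal F)=\sum_{S\in\mathcal F}\mu_p(S)$. A family $\mathcal F\subseteq 2^X$ is monotone increasing if $B\supseteq A\in\mathcal F$ implies $B\in\mathcal F$. The total influence is $I_p(\mathcal F)=\sum_{i\in X}\mu_p(\{S\subseteq X: |\mathcal F\cap\{S,\,S\triangle\{i\}\}|=1\})$. Here $\log_q x=\ln x/\ln q$. *)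

theory Defs
  imports Complex_Main
begin

definition mu_set :: "'a set \<Rightarrow> real \<Rightarrow> 'a set \<Rightarrow> real" where
  "mu_set X p S = p ^ card S * (1 - p) ^ (card X - card S)"

definition mu :: "'a set \<Rightarrow> real \<Rightarrow> 'a set set \<Rightarrow> real" where
  "mu X p F = (\<Sum>S\<in>F. mu_set X p S)"

definition monotone_increasing :: "'a set \<Rightarrow> 'a set set \<Rightarrow> bool" where
  "monotone_increasing X F \<longleftrightarrow>
     F \<subseteq> Pow X \<and> (\<forall>A B. A \<in> F \<and> A \<subseteq> B \<and> B \<subseteq> X \<longrightarrow> B \<in> F)"

definition total_influence :: "'a set \<Rightarrow> real \<Rightarrow> 'a set set \<Rightarrow> real" where
  "total_influence X p F =
     (\<Sum>i\<in>X. mu X p {S. S \<subseteq> X \<and> card (F \<inter> {S, (if i \<in> S then S - {i} else insert i S)}) = 1})"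

definition xlog :: "real \<Rightarrow> real \<Rightarrow> real" where
  "xlog q x = (if x = 0 then 0 else x * log q x)"

end

theory Submission
  imports Defs
begin

lemma key:
  fixes p q A B :: real
  assumes p: "0 < p" "p < 1" and q: "q = 1 - p" and B: "0 \<le> B" "B \<le> A"
  shows "q*A*ln A + p*B*ln B + q*(A-B)*ln q \<le> (q*A+p*B) * ln (q*A+p*B)"
proof (cases "B = 0")
  case True
  show ?thesis
  proof (cases "A = 0")
    case True then show ?thesis using \<open>B=0\<close> by simp
  next
    case False
    then have "A > 0" using B by simp
    have "ln (q*A) = ln q + ln A" using \<open>A>0\<close> p q by (simp add: ln_mult)
    then show ?thesis using True by (simp add: algebra_simps)
  qed
next
  case False
  then have Bp: "B > 0" using B by simp
  have Ap: "A > 0" using Bp B by simp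
  have qp: "q > 0" using p q by simp
  define s where "s = q*A+p*B"
  have sp: "s > 0" using Ap Bp qp p s_def by (simp add: add_pos_pos)
  have l1: "p*B*ln (B/s) \<le> p*B*(B/s - 1)"
    using ln_le_minus_one[of "B/s"] Bp sp p by (intro mult_left_mono) auto
  have l2: "q*(A-B)*ln (q*A/s) \<le> q*(A-B)*(q*A/s - 1)"
    using ln_le_minus_one[of "q*A/s"] Ap sp qp B by (intro mult_left_mono) auto
  have l3: "q*B*ln (A/s) \<le> q*B*(A/s - 1)"
    using ln_le_minus_one[of "A/s"] Ap sp qp Bp by (intro mult_left_mono) auto
  have e1: "ln (B/s) = ln B - ln s" using Bp sp by (simp add: ln_divide_pos)
  have e2: "ln (q*A/s) = ln q + ln A - ln s" using Ap sp qp by (simp add: ln_divide_pos ln_mult)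
  have e3: "ln (A/s) = ln A - ln s" using Ap sp by (simp add: ln_divide_pos)
  have lhs: "p*B*ln (B/s) + q*(A-B)*ln (q*A/s) + q*B*ln (A/s)
      = q*A*ln A + p*B*ln B + q*(A-B)*ln q - s * ln s"
    unfolding e1 e2 e3 by (simp add: s_def algebra_simps)
  have rhs: "p*B*(B/s - 1) + q*(A-B)*(q*A/s - 1) + q*B*(A/s - 1)
      = (p*B*B + q*q*A*(A-B) + q*A*B)/s - s"
  proof -
    have "p*B*(B/s - 1) + q*(A-B)*(q*A/s - 1) + q*B*(A/s - 1)
      = (p*B*B + q*q*A*(A-B) + q*A*B)/s - (p*B + q*(A-B) + q*B)"
      using sp by (simp add: field_simps)
    also have "p*B + q*(A-B) + q*B = s" unfolding s_def by (simp add: algebra_simps)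
    finally show ?thesis .
  qed
  have num: "p*B*B + q*q*A*(A-B) + q*A*B \<le> s*s"
  proof -
    have "s*s - (p*B*B + q*q*A*(A-B) + q*A*B) = p*q*B*(A-B)"
      unfolding s_def q by (simp add: algebra_simps power2_eq_square)
    moreover have "p*q*B*(A-B) \<ge> 0" using p qp Bp B by simp
    ultimately show ?thesis by linarith
  qed
  have "(p*B*B + q*q*A*(A-B) + q*A*B)/s \<le> s"
    using num sp by (simp add: divide_le_eq)
  then have "q*A*ln A + p*B*ln B + q*(A-B)*ln q \<le> s * ln s" using l1 l2 l3 lhs rhs by linarith
  then show ?thesis unfolding s_def .
qed


definition flip :: "'a \<Rightarrow> 'a set \<Rightarrow> 'a set" where
  "flip i S = (if i \<in> S then S - {i} else insert i S)"

definition TI :: "'a set \<Rightarrow> real \<Rightarrow> 'a set set \<Rightarrow> real" where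
  "TI X p F = (\<Sum>i\<in>X. mu X p {S. S \<subseteq> X \<and> (S \<in> F) \<noteq> (flip i S \<in> F)})"

lemma card_pair: "S \<noteq> S' \<Longrightarrow> card (F \<inter> {S, S'}) = 1 \<longleftrightarrow> ((S \<in> F) \<noteq> (S' \<in> F))"
  by (cases "S \<in> F"; cases "S' \<in> F") (auto simp: Int_insert_right)

lemma flip_neq: "S \<noteq> flip i S"
  unfolding flip_def by auto

lemma TI_eq: "total_influence X p F = TI X p F"
  unfolding total_influence_def TI_def
proof (intro sum.cong refl arg_cong[where f="mu X p"])
  fix i show "{S. S \<subseteq> X \<and> card (F \<inter> {S, if i \<in> S then S - {i} else insert i S}) = 1} =
    {S. S \<subseteq> X \<and> (S \<in> F) \<noteq> (flip i S \<in> F)}"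
    using card_pair[OF flip_neq[of _ i], of F] unfolding flip_def by auto
qed

lemma mu_split:
  assumes "finite X" "x \<notin> X" "H \<subseteq> Pow (insert x X)"
  shows "mu (insert x X) p H = (1-p) * mu X p {T. T \<subseteq> X \<and> T \<in> H} + p * mu X p {T. T \<subseteq> X \<and> insert x T \<in> H}"
proof -
  let ?H0 = "{T. T \<subseteq> X \<and> T \<in> H}" and ?H1 = "{T. T \<subseteq> X \<and> insert x T \<in> H}"
  have fin: "finite (Pow X)" using assms(1) by simp
  have f0: "finite ?H0" by (rule finite_subset[OF _ fin]) auto
  have f1: "finite ?H1" by (rule finite_subset[OF _ fin]) auto
  have Hs: "H = ?H0 \<union> insert x ` ?H1"
  proof
    show "H \<subseteq> ?H0 \<union> insert x ` ?H1"
    proof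
      fix S assume S: "S \<in> H"
      show "S \<in> ?H0 \<union> insert x ` ?H1"
      proof (cases "x \<in> S")
        case True
        then have "S = insert x (S - {x})" by auto
        moreover have "S - {x} \<in> ?H1" using S True assms(3) by (auto simp: insert_absorb)
        ultimately show ?thesis by blast
      next
        case False then show ?thesis using S assms(3) by auto
      qed
    qed
  qed auto
  have disj: "?H0 \<inter> insert x ` ?H1 = {}" using assms(2) by auto
  have inj: "inj_on (insert x) ?H1"
    unfolding inj_on_def using assms(2) by (metis (no_types, lifting) insert_ident mem_Collect_eq subsetD)
  have cX: "card (insert x X) = Suc (card X)" using assms by simp
  have w0: "mu_set (insert x X) p T = (1-p) * mu_set X p T" if "T \<in> ?H0" for T
  proof -
    have "card T \<le> card X" using that assms(1) by (simp add: card_mono)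
    then have "card (insert x X) - card T = Suc (card X - card T)" using cX by simp
    then show ?thesis unfolding mu_set_def by simp
  qed
  have w1: "mu_set (insert x X) p (insert x T) = p * mu_set X p T" if "T \<in> ?H1" for T
  proof -
    have fT: "finite T" using that assms(1) finite_subset by auto
    have xT: "x \<notin> T" using that assms(2) by auto
    have "card (insert x T) = Suc (card T)" using fT xT by simp
    then show ?thesis unfolding mu_set_def using cX by simp
  qed
  have "mu (insert x X) p H = (\<Sum>S\<in>?H0. mu_set (insert x X) p S) + (\<Sum>S\<in>insert x ` ?H1. mu_set (insert x X) p S)"
    unfolding mu_def by (subst Hs, rule sum.union_disjoint) (use f0 f1 disj in auto)
  also have "(\<Sum>S\<in>insert x ` ?H1. mu_set (insert x X) p S) = (\<Sum>T\<in>?H1. mu_set (insert x X) p (insert x T))"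
    by (rule sum.reindex[OF inj, unfolded comp_def])
  also have "\<dots> = p * mu X p ?H1" unfolding mu_def sum_distrib_left by (rule sum.cong) (auto simp: w1)
  also have "(\<Sum>S\<in>?H0. mu_set (insert x X) p S) = (1-p) * mu X p ?H0"
    unfolding mu_def sum_distrib_left by (rule sum.cong) (auto simp: w0)
  finally show ?thesis .
qed

lemma mu_nonneg: "0 \<le> p \<Longrightarrow> p \<le> 1 \<Longrightarrow> 0 \<le> mu X p H"
  unfolding mu_def mu_set_def by (intro sum_nonneg) simp

lemma mu_Pow: "finite X \<Longrightarrow> mu X p (Pow X) = 1"
proof (induction X rule: finite_induct)
  case empty then show ?case by (simp add: mu_def mu_set_def)
next
  case (insert x X)
  have "mu (insert x X) p (Pow (insert x X)) = (1-p) * mu X p {T. T \<subseteq> X \<and> T \<in> Pow (insert x X)}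
     + p * mu X p {T. T \<subseteq> X \<and> insert x T \<in> Pow (insert x X)}"
    by (rule mu_split) (use insert in auto)
  also have "{T. T \<subseteq> X \<and> T \<in> Pow (insert x X)} = Pow X" by auto
  also have "{T. T \<subseteq> X \<and> insert x T \<in> Pow (insert x X)} = Pow X" by auto
  finally show ?case using insert by simp
qed

lemma mu_le1:
  assumes "finite X" "0 \<le> p" "p \<le> 1" "H \<subseteq> Pow X"
  shows "mu X p H \<le> 1"
proof -
  have "mu X p H \<le> mu X p (Pow X)"
    unfolding mu_def mu_set_def using assms by (intro sum_mono2) auto
  then show ?thesis using mu_Pow[OF assms(1)] by simp
qed

lemma mu_diff:
  assumes "finite X" "A \<subseteq> B" "B \<subseteq> Pow X"
  shows "mu X p (B - A) = mu X p B - mu X p A"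
  unfolding mu_def using assms by (intro sum_diff) (auto intro: finite_subset)

lemma TI_split:
  assumes fin: "finite X" and x: "x \<notin> X" and mon: "monotone_increasing (insert x X) F"
  defines "F0 \<equiv> {T. T \<subseteq> X \<and> T \<in> F}" and "F1 \<equiv> {T. T \<subseteq> X \<and> insert x T \<in> F}"
  shows "TI (insert x X) p F = (mu X p F1 - mu X p F0) + (1-p) * TI X p F0 + p * TI X p F1"
proof -
  have Fs: "F \<subseteq> Pow (insert x X)" and up: "\<And>A B. A \<in> F \<Longrightarrow> A \<subseteq> B \<Longrightarrow> B \<subseteq> insert x X \<Longrightarrow> B \<in> F"
    using mon unfolding monotone_increasing_def by blast+
  have F01: "F0 \<subseteq> F1" unfolding F0_def F1_def using up[of _ "insert x _"] by blast
  have F1P: "F1 \<subseteq> Pow X" unfolding F1_def by auto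
  let ?B = "\<lambda>Y G i. {S. S \<subseteq> Y \<and> (S \<in> G) \<noteq> (flip i S \<in> G)}"
  have bx: "mu (insert x X) p (?B (insert x X) F x) = mu X p F1 - mu X p F0"
  proof -
    have "mu (insert x X) p (?B (insert x X) F x) = (1-p) * mu X p {T. T \<subseteq> X \<and> T \<in> ?B (insert x X) F x}
      + p * mu X p {T. T \<subseteq> X \<and> insert x T \<in> ?B (insert x X) F x}"
      by (rule mu_split[OF fin x]) auto
    also have "{T. T \<subseteq> X \<and> T \<in> ?B (insert x X) F x} = F1 - F0"
      using x F01 unfolding F0_def F1_def flip_def by auto
    also have "{T. T \<subseteq> X \<and> insert x T \<in> ?B (insert x X) F x} = F1 - F0"
    proof -
      have "flip x (insert x T) = T" if "T \<subseteq> X" for T using that x unfolding flip_def by auto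
      then show ?thesis using x F01 unfolding F0_def F1_def by auto
    qed
    finally show ?thesis using mu_diff[OF fin F01 F1P] by (simp add: algebra_simps)
  qed
  have bi: "mu (insert x X) p (?B (insert x X) F i) = (1-p) * mu X p (?B X F0 i) + p * mu X p (?B X F1 i)"
    if i: "i \<in> X" for i
  proof -
    have ix: "i \<noteq> x" using i x by auto
    have fl: "flip i T \<subseteq> X" if "T \<subseteq> X" for T using that i unfolding flip_def by auto
    have fl2: "flip i (insert x T) = insert x (flip i T)" for T using ix unfolding flip_def by auto
    have "mu (insert x X) p (?B (insert x X) F i) = (1-p) * mu X p {T. T \<subseteq> X \<and> T \<in> ?B (insert x X) F i}
      + p * mu X p {T. T \<subseteq> X \<and> insert x T \<in> ?B (insert x X) F i}"
      by (rule mu_split[OF fin x]) auto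
    also have "{T. T \<subseteq> X \<and> T \<in> ?B (insert x X) F i} = ?B X F0 i"
      using fl unfolding F0_def by auto
    also have "{T. T \<subseteq> X \<and> insert x T \<in> ?B (insert x X) F i} = ?B X F1 i"
      using fl unfolding F1_def by (auto simp: fl2)
    finally show ?thesis .
  qed
  have "TI (insert x X) p F = mu (insert x X) p (?B (insert x X) F x) + (\<Sum>i\<in>X. mu (insert x X) p (?B (insert x X) F i))"
    unfolding TI_def using fin x by simp
  also have "(\<Sum>i\<in>X. mu (insert x X) p (?B (insert x X) F i)) = (1-p) * TI X p F0 + p * TI X p F1"
    unfolding TI_def sum_distrib_left sum.distrib[symmetric] by (rule sum.cong) (simp_all only: bi)
  finally show ?thesis using bx by simp
qed


lemma main_ind:
  assumes p: "0 < p" "p < 1" and fin: "finite X"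
  shows "monotone_increasing X F \<Longrightarrow>
    (1-p) * ln (1-p) * TI X p F \<le> (1 - mu X p F) * ln (1 - mu X p F)"
  using fin
proof (induction X arbitrary: F rule: finite_induct)
  case empty
  then have "F \<subseteq> {{}}" unfolding monotone_increasing_def by auto
  then have "F = {} \<or> F = {{}}" by (simp add: subset_singleton_iff)
  then show ?case by (auto simp: TI_def mu_def mu_set_def)
next
  case (insert x X)
  let ?q = "1 - p"
  define F0 where "F0 = {T. T \<subseteq> X \<and> T \<in> F}"
  define F1 where "F1 = {T. T \<subseteq> X \<and> insert x T \<in> F}"
  have Fs: "F \<subseteq> Pow (insert x X)" and up: "\<And>A B. A \<in> F \<Longrightarrow> A \<subseteq> B \<Longrightarrow> B \<subseteq> insert x X \<Longrightarrow> B \<in> F"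
    using insert.prems unfolding monotone_increasing_def by blast+
  have m0: "monotone_increasing X F0"
  proof -
    have "F0 \<subseteq> Pow X" unfolding F0_def by auto
    moreover have "\<forall>A B. A \<in> F0 \<and> A \<subseteq> B \<and> B \<subseteq> X \<longrightarrow> B \<in> F0"
    proof (intro allI impI)
      fix A B assume a: "A \<in> F0 \<and> A \<subseteq> B \<and> B \<subseteq> X"
      then have "B \<in> F" using up[of A B] unfolding F0_def by auto
      then show "B \<in> F0" using a unfolding F0_def by auto
    qed
    ultimately show ?thesis unfolding monotone_increasing_def by blast
  qed
  have m1: "monotone_increasing X F1"
  proof -
    have "F1 \<subseteq> Pow X" unfolding F1_def by auto
    moreover have "\<forall>A B. A \<in> F1 \<and> A \<subseteq> B \<and> B \<subseteq> X \<longrightarrow> B \<in> F1"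
    proof (intro allI impI)
      fix A B assume a: "A \<in> F1 \<and> A \<subseteq> B \<and> B \<subseteq> X"
      then have "insert x B \<in> F" using up[of "insert x A" "insert x B"] unfolding F1_def by auto
      then show "B \<in> F1" using a unfolding F1_def by auto
    qed
    ultimately show ?thesis unfolding monotone_increasing_def by blast
  qed
  have F01: "F0 \<subseteq> F1" unfolding F0_def F1_def using up[of _ "insert x _"] by blast
  have ti: "TI (insert x X) p F = (mu X p F1 - mu X p F0) + ?q * TI X p F0 + p * TI X p F1"
    unfolding F0_def F1_def by (rule TI_split[OF insert.hyps(1,2) insert.prems])
  have mu: "mu (insert x X) p F = ?q * mu X p F0 + p * mu X p F1"
    unfolding F0_def F1_def by (rule mu_split[OF insert.hyps(1,2) Fs])
  have IH0: "?q * ln ?q * TI X p F0 \<le> (1 - mu X p F0) * ln (1 - mu X p F0)" using insert.IH[OF m0] .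
  have IH1: "?q * ln ?q * TI X p F1 \<le> (1 - mu X p F1) * ln (1 - mu X p F1)" using insert.IH[OF m1] .
  define A where "A = 1 - mu X p F0"
  define B where "B = 1 - mu X p F1"
  have B0: "0 \<le> B" unfolding B_def using mu_le1[OF insert.hyps(1), of p F1] p unfolding F1_def by auto
  have BA: "B \<le> A" unfolding A_def B_def unfolding mu_def
    using F01 p insert.hyps(1) unfolding F1_def mu_set_def
    by (intro diff_left_mono sum_mono2) (auto intro: finite_subset)
  have k: "?q*A*ln A + p*B*ln B + ?q*(A-B)*ln ?q \<le> (?q*A+p*B) * ln (?q*A+p*B)"
    by (rule key[OF p refl B0 BA])
  have s: "1 - mu (insert x X) p F = ?q*A+p*B" unfolding mu A_def B_def by (simp add: algebra_simps)
  have "?q * ln ?q * TI (insert x X) p F = ?q*(A-B)*ln ?q + ?q * (?q * ln ?q * TI X p F0) + p * (?q * ln ?q * TI X p F1)"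
    unfolding ti A_def B_def by (simp add: algebra_simps)
  also have "\<dots> \<le> ?q*(A-B)*ln ?q + ?q * (A * ln A) + p * (B * ln B)"
  proof -
    have "?q * (?q * ln ?q * TI X p F0) \<le> ?q * (A * ln A)"
      using IH0 p unfolding A_def by (intro mult_left_mono) auto
    moreover have "p * (?q * ln ?q * TI X p F1) \<le> p * (B * ln B)"
      using IH1 p unfolding B_def by (intro mult_left_mono) auto
    ultimately show ?thesis by linarith
  qed
  also have "\<dots> \<le> (?q*A+p*B) * ln (?q*A+p*B)" using k by (simp add: algebra_simps)
  finally show ?case unfolding s .
qed

theorem mainTheorem2:
  fixes X :: "'a set" and p :: real and F :: "'a set set"
  assumes "finite X" and "0 < p" and "p < 1"
    and "monotone_increasing X F"
  shows "(1 - p) * total_influence X p F \<ge> xlog (1 - p) (1 - mu X p F)"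
proof -
  let ?m = "1 - mu X p F"
  have L: "ln (1-p) < 0" using assms by simp
  have h: "(1-p) * ln (1-p) * total_influence X p F \<le> ?m * ln ?m"
    using main_ind[OF assms(2,3,1) assms(4)] by (simp add: TI_eq)
  have x: "xlog (1 - p) ?m = ?m * ln ?m / ln (1-p)" unfolding xlog_def log_def by auto
  have "?m * ln ?m / ln (1-p) \<le> (1-p) * total_influence X p F"
  proof -
    have "(1-p) * total_influence X p F * ln (1-p) \<le> ?m * ln ?m" using h by (simp only: mult_ac)
    then show ?thesis by (simp only: neg_divide_le_eq[OF L])
  qed
  then show ?thesis unfolding x .
qed

end
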